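(* Assume (AS1) and (AS2) below. Then the set $$\mathcal{C}=\Big\{\xi=(\xi_0,\xi_1,\dots,\xi_L)\in\mathbb{R}^{L+1}\;:\;\exists\,p\in\mathcal{P}\ \text{with}\ v(p)\ge \xi_0\ \text{and}\ u_i(p)\ge \xi_i+c_i\ \text{for all } i=1,\dots,L\Big\}$$ is convex.
   Context: Setting. Fix an integer $L\ge 1$ and a constant $P_{\max}>0$. A random channel matrix $H$ takes values in a set $\mathcal{H}\subseteq\mathbb{R}^{L\times L}$ and has distribution $\mu$ on the Borel $\sigma$-algebra of $\mathcal{H}$. $\mathbb{E}$ denotes expectation with respect to $\mu$. A power policy is a Borel-measurable map $p:\mathcal{H}\to\mathbb{R}^L$, $p(H)=(p_1(H),\dots,p_L(H))$. Fix a measurable "selection pattern" $\sigma:\mathcal{H}\to\{0,1\}^L$. (In the paper, $\sigma_i(H)=\mathbb{1}(p^\star_i(H)>0)$ is the zero/non-zero pattern of an optimal policy $p^\star$.) Define the feasible policy set $$\mathcal{P}=\{p \text{ measurable}: p(H)\in[0,P_{\max}]^L \text{ and } \mathbb{1}(p_i(H)>0)=\sigma_i(H)\ \text{for all } i \text{ and all } H\in\mathcal{H}\}.$$ Assume $\rho_i:=\mu(\{H:\sigma_i(H)=1\})>0$ for every $i$. Let $f_0:\mathbb{R}^L\times\mathbb{R}^{L\times L}\to\mathbb{R}^L$ and $f_{c,i}:\mathbb{R}^L\times\mathbb{R}^{L\times L}\to\mathbb{R}$ for $i=1,\dots,L$ be measurable. Assume that for every $p\in\mathcal{P}$ the functions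 $H\mapsto f_0(p(H),H)$ and $H\mapsto f_{c,i}(p(H),H)$ are $\mu$-integrable. Let $g:\mathbb{R}^L\to\mathbb{R}$. For $p\in\mathcal{P}$, define $$v(p)=g\big(\mathbb{E}[f_0(p(H),H)]\big),\qquad u_i(p)=\mathbb{E}\big[f_{c,i}(p(H),H)\,\big|\,p_i(H)>0\big]=\frac{1}{\rho_i}\int_{\{\sigma_i=1\}} f_{c,i}(p(H),H)\,d\mu.$$ Here $\mathbb{E}$ of a vector is taken componentwise. The constants $c_1,\dots,c_L\ge 0$ are fixed. Assumptions. (AS1) $\mu$ is non-atomic. (AS2) $g$ is concave and non-decreasing (componentwise). *)

theory Defs
  imports "HOL-Probability.Probability"
begin

text \<open>Channel matrices H are elements of real^'n^'n (L x L with L = CARD('n));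
  power vectors are elements of real^'n. The distribution mu is the measure M.\<close>

definition nonatomic :: "'a measure \<Rightarrow> bool" where
  "nonatomic M \<longleftrightarrow> (\<forall>A\<in>sets M. measure M A > 0 \<longrightarrow>
      (\<exists>B\<in>sets M. B \<subseteq> A \<and> 0 < measure M B \<and> measure M B < measure M A))"

definition feasible_policies ::
  "('h::topological_space) measure \<Rightarrow> real \<Rightarrow> ('h \<Rightarrow> 'n::finite \<Rightarrow> bool) \<Rightarrow> ('h \<Rightarrow> real^'n) set" where
  "feasible_policies M Pmax \<sigma> =
     {p. p \<in> borel_measurable M \<and>
         (\<forall>H\<in>space M. \<forall>i. 0 \<le> p H $ i \<and> p H $ i \<le> Pmax \<and> ((p H $ i > 0) \<longleftrightarrow> \<sigma> H i))}"

definition objective ::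
  "'h measure \<Rightarrow> (real^'n \<Rightarrow> real) \<Rightarrow> (real^'n::finite \<Rightarrow> 'h \<Rightarrow> real^'n) \<Rightarrow> ('h \<Rightarrow> real^'n) \<Rightarrow> real" where
  "objective M g f0 p = g (\<chi> j. (LINT H|M. f0 (p H) H $ j))"

definition cond_constraint ::
  "'h measure \<Rightarrow> ('h \<Rightarrow> 'n::finite \<Rightarrow> bool) \<Rightarrow> ('n \<Rightarrow> real^'n \<Rightarrow> 'h \<Rightarrow> real) \<Rightarrow> ('h \<Rightarrow> real^'n) \<Rightarrow> 'n \<Rightarrow> real" where
  "cond_constraint M \<sigma> fc p i =
     (LINT H:{H\<in>space M. \<sigma> H i}|M. fc i (p H) H) / measure M {H\<in>space M. \<sigma> H i}"

text \<open>The set C in R^(L+1), represented as real x real^'n (xi_0, (xi_1..xi_L)).\<close>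
definition achievable_set ::
  "('h::topological_space) measure \<Rightarrow> real \<Rightarrow> ('h \<Rightarrow> 'n::finite \<Rightarrow> bool) \<Rightarrow> (real^'n \<Rightarrow> real)
   \<Rightarrow> (real^'n \<Rightarrow> 'h \<Rightarrow> real^'n) \<Rightarrow> ('n \<Rightarrow> real^'n \<Rightarrow> 'h \<Rightarrow> real) \<Rightarrow> real^'n \<Rightarrow> (real \<times> (real^'n)) set" where
  "achievable_set M Pmax \<sigma> g f0 fc c =
     {(\<xi>0, \<xi>). \<exists>p\<in>feasible_policies M Pmax \<sigma>.
        objective M g f0 p \<ge> \<xi>0 \<and> (\<forall>i. cond_constraint M \<sigma> fc p i \<ge> \<xi> $ i + c $ i)}"

end

theory Submission imports Defs begin

context finite_measure
begin

definition bnd :: "('a \<Rightarrow> real) \<Rightarrow> bool" where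
  "bnd g \<longleftrightarrow> g \<in> borel_measurable M \<and> (\<forall>x\<in>space M. \<bar>g x\<bar> \<le> 1)"

lemma bnd_one: "bnd (\<lambda>_. 1)" by (simp add: bnd_def)

lemma bnd_sint: assumes "bnd g" "A \<in> sets M" shows "set_integrable M A g"
  unfolding set_integrable_def
proof (rule integrable_const_bound[where B=1])
  show "AE x in M. norm (indicator A x *\<^sub>R g x) \<le> 1"
    using assms by (auto simp: bnd_def indicator_def)
  show "(\<lambda>x. indicator A x *\<^sub>R g x) \<in> borel_measurable M"
    using assms by (auto simp: bnd_def)
qed

lemma V_one: "A \<in> sets M \<Longrightarrow> (LINT x:A|M. 1) = measure M A"
  by (simp add: set_integral_const)

lemma V_bound: assumes "bnd g" "A \<in> sets M" shows "\<bar>LINT x:A|M. g x\<bar> \<le> measure M A"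
proof -
  have i1: "set_integrable M A (\<lambda>_. 1::real)" using bnd_sint[OF bnd_one assms(2)] .
  have i2: "set_integrable M A (\<lambda>_. -1::real)"
    using bnd_sint[of "\<lambda>_. -1" A] assms(2) by (simp add: bnd_def)
  have s: "\<And>x. x \<in> A \<Longrightarrow> \<bar>g x\<bar> \<le> 1" using assms sets.sets_into_space by (auto simp: bnd_def)
  have "(LINT x:A|M. g x) \<le> (LINT x:A|M. 1)"
    by (rule set_integral_mono[OF bnd_sint[OF assms] i1]) (use s in force)
  moreover have "(LINT x:A|M. -1) \<le> (LINT x:A|M. g x)"
    by (rule set_integral_mono[OF i2 bnd_sint[OF assms]]) (use s in force)
  moreover have "(LINT x:A|M. (-1::real)) = - measure M A"
    using assms(2) by (simp add: set_integral_const)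
  ultimately show ?thesis using V_one[OF assms(2)] by linarith
qed

lemma V_Un: assumes "bnd g" "A \<in> sets M" "B \<in> sets M" "A \<inter> B = {}"
  shows "(LINT x:A\<union>B|M. g x) = (LINT x:A|M. g x) + (LINT x:B|M. g x)"
  by (rule set_integral_Un[OF assms(4) bnd_sint[OF assms(1,2)] bnd_sint[OF assms(1,3)]])

lemma V_diff: assumes "bnd g" "A \<in> sets M" "B \<in> sets M" "B \<subseteq> A"
  shows "(LINT x:A-B|M. g x) = (LINT x:A|M. g x) - (LINT x:B|M. g x)"
proof -
  have "A = (A - B) \<union> B" using assms by auto
  hence "(LINT x:A|M. g x) = (LINT x:(A-B)\<union>B|M. g x)" by simp
  also have "\<dots> = (LINT x:A-B|M. g x) + (LINT x:B|M. g x)"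
    using assms by (intro V_Un) auto
  finally show ?thesis by simp
qed

lemma V_close: assumes "bnd g" "A \<in> sets M" "B \<in> sets M" "B \<subseteq> A"
  shows "\<bar>(LINT x:A|M. g x) - (LINT x:B|M. g x)\<bar> \<le> measure M A - measure M B"
  using V_bound[OF assms(1), of "A - B"] V_diff[OF assms] assms
  by (simp add: finite_measure_Diff)

lemma small_subset:
  assumes na: "nonatomic M" and A: "A \<in> sets M" "measure M A > 0" and e: "e > 0"
  shows "\<exists>B\<in>sets M. B \<subseteq> A \<and> 0 < measure M B \<and> measure M B < e"
proof -
  have "\<exists>B\<in>sets M. B \<subseteq> A \<and> 0 < measure M B \<and> measure M B \<le> measure M A / 2^n" for n
  proof (induction n)
    case 0 then show ?case using A by auto
  next
    case (Suc n)
    then obtain B where B: "B \<in> sets M" "B \<subseteq> A" "0 < measure M B" "measure M B \<le> measure M A / 2^n" by blast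
    then obtain B' where B': "B' \<in> sets M" "B' \<subseteq> B" "0 < measure M B'" "measure M B' < measure M B"
      using na unfolding nonatomic_def by blast
    have d: "measure M (B - B') = measure M B - measure M B'"
      using B B' by (simp add: finite_measure_Diff)
    show ?case
    proof (cases "measure M B' \<le> measure M B / 2")
      case True then show ?thesis using B B' by (intro bexI[of _ B']) auto
    next
      case False then show ?thesis using B B' d by (intro bexI[of _ "B - B'"]) auto
    qed
  qed
  moreover obtain n where "measure M A / 2^n < e"
  proof -
    obtain n where "measure M A / e < 2^n" using real_arch_pow[of 2 "measure M A / e"] by auto
    then have "measure M A / 2^n < e" using e by (simp add: field_simps)
    then show ?thesis using that by blast
  qed
  ultimately show ?thesis by (meson le_less_trans)
qed

end

context finite_measure
begin

lemma sierpinski: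
  assumes na: "nonatomic M" and E: "E \<in> sets M" and t: "0 \<le> t" "t \<le> measure M E"
  shows "\<exists>A\<in>sets M. A \<subseteq> E \<and> measure M A = t"
proof -
  define Op where "Op X = {B \<in> sets M. B \<subseteq> E - X \<and> measure M B \<le> t - measure M X}" for X
  define s where "s X = Sup (measure M ` Op X)" for X
  have bdd: "bdd_above (measure M ` Op X)" for X
    by (rule bdd_aboveI[where M="measure M (space M)"]) (auto simp: Op_def bounded_measure)
  have ex: "\<exists>B. B \<in> Op X \<and> s X \<le> 2 * measure M B" if "measure M X \<le> t" for X
  proof (cases "s X \<le> 0")
    case True
    have "{} \<in> Op X" using that by (auto simp: Op_def)
    then show ?thesis using True by (intro exI[of _ "{}"]) auto
  next
    case False
    have ne: "measure M ` Op X \<noteq> {}"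
      using that by (auto simp: Op_def intro!: image_eqI[of _ _ "{}"])
    have "s X / 2 < s X" using False by simp
    then obtain B where "B \<in> Op X" "s X / 2 < measure M B"
      using less_cSup_iff[OF ne bdd] unfolding s_def by auto
    then show ?thesis by (intro exI[of _ B]) auto
  qed
  define nxt where "nxt X = X \<union> (SOME B. B \<in> Op X \<and> s X \<le> 2 * measure M B)" for X
  define X where "X n = (nxt ^^ n) {}" for n
  define Bn where "Bn n = (SOME B. B \<in> Op (X n) \<and> s (X n) \<le> 2 * measure M B)" for n
  have XS: "X (Suc n) = X n \<union> Bn n" for n by (simp add: X_def Bn_def nxt_def)
  have inv: "X n \<in> sets M \<and> X n \<subseteq> E \<and> measure M (X n) \<le> t" for n
  proof (induction n)
    case 0 then show ?case using t by (simp add: X_def)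
  next
    case (Suc n)
    have "Bn n \<in> Op (X n) \<and> s (X n) \<le> 2 * measure M (Bn n)"
      unfolding Bn_def by (rule someI_ex[OF ex]) (use Suc in auto)
    then have B: "Bn n \<in> sets M" "Bn n \<subseteq> E - X n" "measure M (Bn n) \<le> t - measure M (X n)"
      by (auto simp: Op_def)
    have "measure M (X n \<union> Bn n) = measure M (X n) + measure M (Bn n)"
      using B Suc by (intro finite_measure_Union) auto
    then show ?case using B Suc by (auto simp: XS)
  qed
  have Bprop: "Bn n \<in> Op (X n) \<and> s (X n) \<le> 2 * measure M (Bn n)" for n
    unfolding Bn_def by (rule someI_ex[OF ex]) (use inv in auto)
  have madd: "measure M (X (Suc n)) = measure M (X n) + measure M (Bn n)" for n
    unfolding XS using Bprop[of n] inv[of n] by (intro finite_measure_Union) (auto simp: Op_def)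
  have inc: "incseq X" by (rule incseq_SucI) (simp add: XS)
  define A where "A = (\<Union>n. X n)"
  have Asets: "A \<in> sets M" using inv by (auto simp: A_def)
  have AE: "A \<subseteq> E" using inv by (auto simp: A_def)
  have lim: "(\<lambda>n. measure M (X n)) \<longlonglongrightarrow> measure M A"
    unfolding A_def by (rule finite_Lim_measure_incseq) (use inv inc in auto)
  have Ale: "measure M A \<le> t"
    by (rule LIMSEQ_le_const2[OF lim]) (use inv in auto)
  have "measure M A = t"
  proof (rule ccontr)
    assume "measure M A \<noteq> t"
    then have lt: "measure M A < t" using Ale by simp
    have "measure M (E - A) = measure M E - measure M A"
      using Asets AE E by (simp add: finite_measure_Diff)
    then have pos: "measure M (E - A) > 0" using lt t by simp
    obtain B where B: "B \<in> sets M" "B \<subseteq> E - A" "0 < measure M B" "measure M B < t - measure M A"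
      using small_subset[OF na _ pos, of "t - measure M A"] E Asets lt by auto
    have XA: "X n \<subseteq> A" for n by (auto simp: A_def)
    have "measure M (X n) \<le> measure M A" for n
      using XA Asets by (intro finite_measure_mono) auto
    then have BO: "B \<in> Op (X n)" for n using B XA[of n]
      by (auto simp: Op_def intro: order.trans[OF less_imp_le[OF B(4)]] )
    have "measure M B \<le> s (X n)" for n
      unfolding s_def by (rule cSup_upper[OF _ bdd]) (use BO in auto)
    then have Bg: "measure M B / 2 \<le> measure M (Bn n)" for n
    proof -
      have "measure M B \<le> s (X n)" by fact
      then show ?thesis using Bprop[of n] by linarith
    qed
    have grow: "real n * (measure M B / 2) \<le> measure M (X n)" for n
    proof (induction n)
      case 0 then show ?case by (simp add: X_def)
    next
      case (Suc n) then show ?case using madd[of n] Bg[of n] by (simp add: algebra_simps)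
    qed
    obtain n where "t / (measure M B / 2) < real n" using reals_Archimedean2 by blast
    then have "t < real n * (measure M B / 2)" using B(3) by (simp add: field_simps)
    then show False using grow[of n] inv[of n] by linarith
  qed
  then show ?thesis using Asets AE by blast
qed

end

fun dy :: "('a set \<Rightarrow> 'a set) \<Rightarrow> 'a set \<Rightarrow> nat \<Rightarrow> nat \<Rightarrow> 'a set" where
  "dy h E 0 k = (if k = 0 then {} else E)"
| "dy h E (Suc n) k = (if even k then dy h E n (k div 2)
      else dy h E n (k div 2) \<union> h (dy h E n (k div 2 + 1) - dy h E n (k div 2)))"

lemma zero_by_pow:
  fixes x c :: real
  assumes "\<And>n. \<bar>x\<bar> \<le> c / 2^n"
  shows "x = 0"
proof (rule ccontr)
  assume "x \<noteq> 0"
  then have xp: "\<bar>x\<bar> > 0" by simp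
  obtain n where "c / \<bar>x\<bar> < 2^n" using real_arch_pow[of 2 "c / \<bar>x\<bar>"] by auto
  then have "c / 2^n < \<bar>x\<bar>" using xp by (simp add: field_simps)
  then show False using assms[of n] by simp
qed

context finite_measure
begin

definition chain :: "('a \<Rightarrow> real) set \<Rightarrow> 'a set \<Rightarrow> (real \<Rightarrow> 'a set) \<Rightarrow> bool" where
  "chain T E C \<longleftrightarrow> (\<forall>t. C t \<in> sets M \<and> C t \<subseteq> E) \<and> (\<forall>s t. s \<le> t \<longrightarrow> C s \<subseteq> C t) \<and>
     (\<forall>t\<in>{0..1}. \<forall>g\<in>T. (LINT x:C t|M. g x) = t * (LINT x:E|M. g x))"

lemma dyadic_chain:
  assumes T: "\<And>g. g \<in> T \<Longrightarrow> bnd g" "(\<lambda>_. 1) \<in> T"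
    and half: "\<And>X. X \<in> sets M \<Longrightarrow> \<exists>H\<in>sets M. H \<subseteq> X \<and> (\<forall>g\<in>T. (LINT x:H|M. g x) = (LINT x:X|M. g x) / 2)"
    and E: "E \<in> sets M"
  shows "\<exists>C. chain T E C"
proof -
  define hf where "hf X = (SOME H. H\<in>sets M \<and> H \<subseteq> X \<and> (\<forall>g\<in>T. (LINT x:H|M. g x) = (LINT x:X|M. g x) / 2))" for X
  have hf: "hf X \<in> sets M \<and> hf X \<subseteq> X \<and> (\<forall>g\<in>T. (LINT x:hf X|M. g x) = (LINT x:X|M. g x) / 2)"
    if "X \<in> sets M" for X
    unfolding hf_def by (rule someI_ex) (use half[OF that] in blast)
  let ?A = "dy hf E"
  have P1: "?A n k \<in> sets M \<and> ?A n k \<subseteq> E" for n k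
  proof (induction n arbitrary: k)
    case 0 then show ?case using E by auto
  next
    case (Suc n)
    have "?A n (k div 2 + 1) - ?A n (k div 2) \<in> sets M" using Suc by auto
    from hf[OF this] show ?case using Suc by auto
  qed
  have P2s: "?A n k \<subseteq> ?A n (Suc k)" for n k
  proof (induction n arbitrary: k)
    case 0 then show ?case by auto
  next
    case (Suc n)
    show ?case
    proof (cases "even k")
      case True then show ?thesis by auto
    next
      case False
      then have "Suc k div 2 = k div 2 + 1" "even (Suc k)" by presburger+
      moreover have "hf (?A n (k div 2 + 1) - ?A n (k div 2)) \<subseteq> ?A n (k div 2 + 1)"
        using hf[of "?A n (k div 2 + 1) - ?A n (k div 2)"] P1 by auto
      moreover have "?A n (k div 2) \<subseteq> ?A n (k div 2 + 1)" using Suc by simp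
      ultimately show ?thesis using False by auto
    qed
  qed
  have P2: "k \<le> k' \<Longrightarrow> ?A n k \<subseteq> ?A n k'" for n k k'
    using lift_Suc_mono_le[of "?A n", OF P2s] by blast
  have P3: "\<forall>g\<in>T. (LINT x:?A n k|M. g x) = (real k / 2^n) * (LINT x:E|M. g x)" if "k \<le> 2^n" for n k
    using that
  proof (induction n arbitrary: k)
    case 0
    then have "k = 0 \<or> k = 1" by auto
    then show ?case by (auto simp: set_lebesgue_integral_def)
  next
    case (Suc n)
    show ?case
    proof (cases "even k")
      case True
      then obtain j where j: "k = 2 * j" by blast
      then have "j \<le> 2^n" using Suc.prems by simp
      then show ?thesis using Suc.IH[of j] j by (simp add: field_simps)
    next
      case False
      then obtain j where j: "k = 2 * j + 1" using oddE by blast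
      then have jl: "j + 1 \<le> 2^n" using Suc.prems by simp
      have kd: "k div 2 = j" using j by simp
      let ?X = "?A n (j + 1) - ?A n j"
      have Xs: "?X \<in> sets M" using P1 by auto
      have dis: "?A n j \<inter> hf ?X = {}" using hf[OF Xs] by auto
      show ?thesis
      proof
        fix g assume g: "g \<in> T"
        have "(LINT x:?A (Suc n) k|M. g x) = (LINT x:?A n j \<union> hf ?X|M. g x)"
          using False kd by simp
        also have "\<dots> = (LINT x:?A n j|M. g x) + (LINT x:hf ?X|M. g x)"
          using V_Un[OF T(1)[OF g] _ _ dis] P1 hf[OF Xs] by auto
        also have "(LINT x:hf ?X|M. g x) = (LINT x:?X|M. g x) / 2" using hf[OF Xs] g by auto
        also have "(LINT x:?X|M. g x) = (LINT x:?A n (j+1)|M. g x) - (LINT x:?A n j|M. g x)"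
          using V_diff[OF T(1)[OF g]] P1 P2[of j "j+1" n] by auto
        finally show "(LINT x:?A (Suc n) k|M. g x) = (real k / 2^Suc n) * (LINT x:E|M. g x)"
          using Suc.IH[of j] Suc.IH[of "j+1"] jl g j by (simp add: field_simps)
      qed
    qed
  qed
  have P4: "?A n (2^n) = E" for n
    by (induction n) auto
  have P5: "?A (n + m) (k * 2^m) = ?A n k" for n m k
    by (induction m) (auto simp: mult.assoc[symmetric])
  define C where "C t = (\<Union>n. \<Union>k. if real k \<le> t * 2^n then ?A n k else {})" for t
  have Cs: "C t \<in> sets M \<and> C t \<subseteq> E" for t
    using P1 unfolding C_def by (auto intro!: sets.countable_UN)
  have Cm: "s \<le> t \<Longrightarrow> C s \<subseteq> C t" for s t
  proof -
    assume st: "s \<le> t"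
    have "real k \<le> s * 2^n \<Longrightarrow> real k \<le> t * 2^n" for k n
      using st by (smt (verit) mult_right_mono zero_le_power)
    then show ?thesis unfolding C_def by (auto split: if_splits)
  qed
  have Cv: "(LINT x:C t|M. g x) = t * (LINT x:E|M. g x)" if t: "0 \<le> t" "t \<le> 1" and g: "g \<in> T" for t g
  proof -
    have mE: "0 \<le> measure M E" by simp
    have "\<bar>(LINT x:C t|M. g x) - t * (LINT x:E|M. g x)\<bar> \<le> (2 * measure M E) / 2^n" for n
    proof -
      define k where "k = nat \<lfloor>t * 2^n\<rfloor>"
      have tp: "0 \<le> t * 2^n" using t by simp
      have kle: "real k \<le> t * 2^n" using tp by (simp add: k_def)
      have klt: "t * 2^n < real k + 1" using tp by (simp add: k_def)
      have "t * 2^n \<le> 2^n" using t by simp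
      then have "real k \<le> 2^n" using kle by linarith
      then have k2: "k \<le> 2^n" by simp
      define k' where "k' = min (k+1) (2^n)"
      have k'ge: "k \<le> k'" "k' \<le> 2^n" "real k' - real k \<le> 1" using k2 by (auto simp: k'_def)
      have low: "?A n k \<subseteq> C t"
      proof -
        have "?A n k = (if real k \<le> t * 2^n then ?A n k else {})" using kle by simp
        then show ?thesis unfolding C_def by blast
      qed
      have up: "C t \<subseteq> ?A n k'"
      proof (cases "k < 2^n")
        case False
        then have "k' = 2^n" using k2 by (simp add: k'_def)
        then show ?thesis using Cs[of t] P4[of n] by simp
      next
        case True
        then have k'e: "k' = k + 1" by (simp add: k'_def)
        show ?thesis unfolding C_def
        proof (intro UN_least)
          fix m j
          show "(if real j \<le> t * 2^m then ?A m j else {}) \<subseteq> ?A n k'"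
          proof (cases "real j \<le> t * 2^m")
            case True
            have "real j * 2^n \<le> t * 2^m * 2^n" using True by simp
            also have "\<dots> = t * 2^n * 2^m" by simp
            also have "\<dots> < (real k + 1) * 2^m" using klt by simp
            finally have "real (j * 2^n) < real ((k + 1) * 2^m)" by (simp add: algebra_simps)
            then have "j * 2^n < (k + 1) * 2^m" by (simp only: of_nat_less_iff)
            then have "?A (m + n) (j * 2^n) \<subseteq> ?A (n + m) ((k+1) * 2^m)"
              using P2 by (simp add: add.commute)
            then show ?thesis using True P5[of m n j] P5[of n m "k+1"] k'e by simp
          qed simp
        qed
      qed
      have one: "(\<lambda>_. 1) \<in> T" by (rule T(2))
      have mv: "measure M (?A n i) = real i / 2^n * measure M E" if "i \<le> 2^n" for i
        using P3[OF that] one V_one P1 E by auto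
      have d1: "\<bar>(LINT x:C t|M. g x) - (LINT x:?A n k|M. g x)\<bar> \<le> measure M (C t) - measure M (?A n k)"
        by (rule V_close[OF T(1)[OF g]]) (use Cs P1 low in auto)
      have "measure M (C t) \<le> measure M (?A n k')"
        using up P1 Cs by (intro finite_measure_mono) auto
      moreover have "measure M (?A n k') - measure M (?A n k) = (real k' - real k) / 2^n * measure M E"
        using mv[OF k2] mv[OF k'ge(2)] by (simp add: diff_divide_distrib left_diff_distrib)
      moreover have "(real k' - real k) / 2^n * measure M E \<le> 1 / 2^n * measure M E"
        using k'ge(3) mE by (intro mult_right_mono divide_right_mono) auto
      ultimately have d2: "measure M (C t) - measure M (?A n k) \<le> measure M E / 2^n" by simp
      have vk: "(LINT x:?A n k|M. g x) = real k / 2^n * (LINT x:E|M. g x)" using P3[OF k2] g by auto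
      have bE: "\<bar>LINT x:E|M. g x\<bar> \<le> measure M E" using V_bound[OF T(1)[OF g] E] .
      have tk: "\<bar>real k / 2^n - t\<bar> \<le> 1 / 2^n"
      proof -
        have a: "\<bar>real k - t*2^n\<bar> \<le> 1" using kle klt by linarith
        have "real k / 2^n - t = (real k - t*2^n)/2^n" by (simp add: field_simps)
        then have "\<bar>real k / 2^n - t\<bar> = \<bar>real k - t*2^n\<bar> / 2^n" by simp
        also have "\<dots> \<le> 1 / 2^n" using a by (intro divide_right_mono) auto
        finally show ?thesis .
      qed
      have "\<bar>real k / 2^n * (LINT x:E|M. g x) - t * (LINT x:E|M. g x)\<bar>
            = \<bar>real k / 2^n - t\<bar> * \<bar>LINT x:E|M. g x\<bar>"
        by (simp only: abs_mult[symmetric] left_diff_distrib)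
      also have "\<dots> \<le> 1 / 2^n * measure M E"
        using tk bE by (intro mult_mono) auto
      finally have d3: "\<bar>(LINT x:?A n k|M. g x) - t * (LINT x:E|M. g x)\<bar> \<le> measure M E / 2^n"
        using vk by simp
      show ?thesis using d1 d2 d3 by linarith
    qed
    then show ?thesis using zero_by_pow[of _ "2 * measure M E"] by fastforce
  qed
  show ?thesis unfolding chain_def using Cs Cm Cv by (intro exI[of _ C]) auto
qed

end

context finite_measure
begin

lemma chain_lip:
  assumes C: "chain T E C" and one: "(\<lambda>_. 1) \<in> T" and f: "bnd f" and E: "E \<in> sets M"
    and st: "s \<in> {0..1}" "t \<in> {0..1}"
  shows "\<bar>(LINT x:C s|M. f x) - (LINT x:C t|M. f x)\<bar> \<le> \<bar>s - t\<bar> * measure M E"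
proof -
  have ms: "measure M (C u) = u * measure M E" if "u \<in> {0..1}" for u
    using C one that V_one E unfolding chain_def by (metis (no_types, lifting))
  have gen: "\<bar>(LINT x:C b|M. f x) - (LINT x:C a|M. f x)\<bar> \<le> (b - a) * measure M E"
    if "a \<le> b" "a \<in> {0..1}" "b \<in> {0..1}" for a b
  proof -
    have "\<bar>(LINT x:C b|M. f x) - (LINT x:C a|M. f x)\<bar> \<le> measure M (C b) - measure M (C a)"
      using C that by (intro V_close[OF f]) (auto simp: chain_def)
    then show ?thesis using ms[OF that(2)] ms[OF that(3)] by (simp add: left_diff_distrib)
  qed
  show ?thesis
  proof (cases "s \<le> t")
    case True then show ?thesis using gen[OF True st(1) st(2)] by (simp add: abs_minus_commute)
  next
    case False then show ?thesis using gen[of t s] st by simp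
  qed
qed

lemma chain_ends:
  assumes C: "chain T E C" and one: "(\<lambda>_. 1) \<in> T" and f: "bnd f" and E: "E \<in> sets M"
  shows "(LINT x:C 0|M. f x) = 0" "(LINT x:C 1|M. f x) = (LINT x:E|M. f x)"
proof -
  have ms: "measure M (C u) = u * measure M E" if "u \<in> {0..1}" for u
    using C one that V_one E unfolding chain_def by (metis (no_types, lifting))
  have "\<bar>LINT x:C 0|M. f x\<bar> \<le> measure M (C 0)" using C by (intro V_bound[OF f]) (auto simp: chain_def)
  then show "(LINT x:C 0|M. f x) = 0" using ms[of 0] by simp
  have "\<bar>(LINT x:E|M. f x) - (LINT x:C 1|M. f x)\<bar> \<le> measure M E - measure M (C 1)"
    using C E by (intro V_close[OF f]) (auto simp: chain_def)
  then show "(LINT x:C 1|M. f x) = (LINT x:E|M. f x)" using ms[of 1] by simp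
qed

lemma halving_step:
  assumes T: "\<And>g. g \<in> T \<Longrightarrow> bnd g" and one: "(\<lambda>_. 1) \<in> T" and f: "bnd f"
    and ch: "\<And>E. E \<in> sets M \<Longrightarrow> \<exists>C. chain T E C"
    and X: "X \<in> sets M"
  shows "\<exists>H\<in>sets M. H \<subseteq> X \<and> (\<forall>g\<in>insert f T. (LINT x:H|M. g x) = (LINT x:X|M. g x) / 2)"
proof -
  obtain C where C: "chain T X C" using ch[OF X] by blast
  define E1 where "E1 = C (1/2)"
  define E2 where "E2 = X - E1"
  have E1s: "E1 \<in> sets M" "E1 \<subseteq> X" using C by (auto simp: chain_def E1_def)
  have E2s: "E2 \<in> sets M" "E2 \<subseteq> X" using E1s X by (auto simp: E2_def)
  have dis12: "E1 \<inter> E2 = {}" by (auto simp: E2_def)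
  have XU: "X = E1 \<union> E2" using E1s by (auto simp: E2_def)
  have vU: "(LINT x:X|M. g x) = (LINT x:E1|M. g x) + (LINT x:E2|M. g x)" if "bnd g" for g
    using V_Un[OF that E1s(1) E2s(1) dis12] XU by simp
  have v1: "(LINT x:E1|M. g x) = (LINT x:X|M. g x) / 2" if "g \<in> T" for g
    using C that unfolding chain_def E1_def by auto
  have v2: "(LINT x:E2|M. g x) = (LINT x:X|M. g x) / 2" if "g \<in> T" for g
    using vU[OF T[OF that]] v1[OF that] by simp
  obtain B where B: "chain T E1 B" using ch[OF E1s(1)] by blast
  obtain D where D: "chain T E2 D" using ch[OF E2s(1)] by blast
  have Bs: "B u \<in> sets M" "B u \<subseteq> E1" for u using B by (auto simp: chain_def)
  have Ds: "D u \<in> sets M" "D u \<subseteq> E2" for u using D by (auto simp: chain_def)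
  define H where "H u = B u \<union> (E2 - D u)" for u
  have Hv: "(LINT x:H u|M. g x) = (LINT x:B u|M. g x) + (LINT x:E2|M. g x) - (LINT x:D u|M. g x)"
    if g: "bnd g" for g u
  proof -
    have "(LINT x:H u|M. g x) = (LINT x:B u|M. g x) + (LINT x:E2 - D u|M. g x)"
      unfolding H_def using Bs[of u] Ds[of u] E2s dis12 by (intro V_Un[OF g]) auto
    also have "(LINT x:E2 - D u|M. g x) = (LINT x:E2|M. g x) - (LINT x:D u|M. g x)"
      using Ds[of u] E2s by (intro V_diff[OF g]) auto
    finally show ?thesis by simp
  qed
  have Hs: "H u \<in> sets M" "H u \<subseteq> X" for u using Bs[of u] Ds[of u] E1s E2s by (auto simp: H_def)
  define \<phi> where "\<phi> u = (LINT x:B u|M. f x) + (LINT x:E2|M. f x) - (LINT x:D u|M. f x)" for u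
  have lip: "(measure M E1 + measure M E2)-lipschitz_on {0..1} \<phi>"
  proof (rule lipschitz_onI)
    fix s t :: real assume st: "s \<in> {0..1}" "t \<in> {0..1}"
    have a: "\<bar>(LINT x:B s|M. f x) - (LINT x:B t|M. f x)\<bar> \<le> \<bar>s - t\<bar> * measure M E1"
      by (rule chain_lip[OF B one f E1s(1) st])
    have b: "\<bar>(LINT x:D s|M. f x) - (LINT x:D t|M. f x)\<bar> \<le> \<bar>s - t\<bar> * measure M E2"
      by (rule chain_lip[OF D one f E2s(1) st])
    show "dist (\<phi> s) (\<phi> t) \<le> (measure M E1 + measure M E2) * dist s t"
      using a b unfolding \<phi>_def dist_real_def by (simp add: algebra_simps abs_diff_le_iff abs_le_iff)
  qed simp
  have cont: "continuous_on {0..1} \<phi>" by (rule lipschitz_on_continuous_on[OF lip])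
  have p0: "\<phi> 0 = (LINT x:E2|M. f x)"
    using chain_ends[OF B one f E1s(1)] chain_ends[OF D one f E2s(1)] by (simp add: \<phi>_def)
  have p1: "\<phi> 1 = (LINT x:E1|M. f x)"
    using chain_ends[OF B one f E1s(1)] chain_ends[OF D one f E2s(1)] by (simp add: \<phi>_def)
  define y where "y = (LINT x:X|M. f x) / 2"
  have y: "y = ((LINT x:E1|M. f x) + (LINT x:E2|M. f x)) / 2" using vU[OF f] by (simp add: y_def)
  obtain u where u: "0 \<le> u" "u \<le> 1" "\<phi> u = y"
  proof (cases "\<phi> 0 \<le> \<phi> 1")
    case True
    have "\<exists>u. 0 \<le> u \<and> u \<le> 1 \<and> \<phi> u = y"
      by (rule IVT'[OF _ _ _ cont]) (use True p0 p1 y in auto)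
    then show ?thesis using that by blast
  next
    case False
    have "\<exists>u. 0 \<le> u \<and> u \<le> 1 \<and> \<phi> u = y"
      by (rule IVT2'[OF _ _ _ cont]) (use False p0 p1 y in auto)
    then show ?thesis using that by blast
  qed
  have "\<forall>g\<in>insert f T. (LINT x:H u|M. g x) = (LINT x:X|M. g x) / 2"
  proof
    fix g assume g: "g \<in> insert f T"
    show "(LINT x:H u|M. g x) = (LINT x:X|M. g x) / 2"
    proof (cases "g = f")
      case True then show ?thesis using Hv[OF f, of u] u by (simp add: \<phi>_def y_def)
    next
      case False
      then have gT: "g \<in> T" using g by auto
      have "(LINT x:B u|M. g x) = u * (LINT x:E1|M. g x)" using B u gT by (auto simp: chain_def)
      moreover have "(LINT x:D u|M. g x) = u * (LINT x:E2|M. g x)" using D u gT by (auto simp: chain_def)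
      ultimately show ?thesis using Hv[OF T[OF gT], of u] v1[OF gT] v2[OF gT] by simp
    qed
  qed
  then show ?thesis using Hs by blast
qed

lemma chains_exist:
  assumes na: "nonatomic M" and S: "finite S" "\<And>g. g \<in> S \<Longrightarrow> bnd g"
  shows "E \<in> sets M \<Longrightarrow> \<exists>C. chain (insert (\<lambda>_. 1) S) E C"
  using S
proof (induction S arbitrary: E rule: finite_induct)
  case empty
  show ?case
  proof (rule dyadic_chain)
    show "\<And>g. g \<in> {\<lambda>_. 1::real} \<Longrightarrow> bnd g" using bnd_one by auto
    fix X assume X: "X \<in> sets M"
    obtain H where H: "H \<in> sets M" "H \<subseteq> X" "measure M H = measure M X / 2"
      using sierpinski[OF na X, of "measure M X / 2"] by auto
    then show "\<exists>H\<in>sets M. H \<subseteq> X \<and> (\<forall>g\<in>{\<lambda>_. 1::real}. (LINT x:H|M. g x) = (LINT x:X|M. g x) / 2)"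
      using X V_one by auto
  qed (use empty in auto)
next
  case (insert f S)
  have T: "\<And>g. g \<in> insert (\<lambda>_. 1) S \<Longrightarrow> bnd g" using insert bnd_one by auto
  have ch: "\<And>E. E \<in> sets M \<Longrightarrow> \<exists>C. chain (insert (\<lambda>_. 1) S) E C" using insert by auto
  have eq: "insert (\<lambda>_. 1) (insert f S) = insert f (insert (\<lambda>_. 1) S)" by auto
  show ?case unfolding eq
  proof (rule dyadic_chain)
    show "\<And>g. g \<in> insert f (insert (\<lambda>_. 1) S) \<Longrightarrow> bnd g" using T insert by auto
    fix X assume X: "X \<in> sets M"
    show "\<exists>H\<in>sets M. H \<subseteq> X \<and> (\<forall>g\<in>insert f (insert (\<lambda>_. 1) S). (LINT x:H|M. g x) = (LINT x:X|M. g x) / 2)"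
      by (rule halving_step[OF T _ _ ch X]) (use insert in auto)
  qed (use insert in auto)
qed

lemma lyapunov_bnd:
  assumes na: "nonatomic M" and S: "finite S" "\<And>g. g \<in> S \<Longrightarrow> bnd g"
    and th: "0 \<le> \<theta>" "\<theta> \<le> 1"
  shows "\<exists>A\<in>sets M. \<forall>g\<in>S. (LINT x:A|M. g x) = \<theta> * (LINT x:space M|M. g x)"
proof -
  obtain C where "chain (insert (\<lambda>_. 1) S) (space M) C" using chains_exist[OF na S] by blast
  then show ?thesis using th unfolding chain_def by (intro bexI[of _ "C \<theta>"]) auto
qed

end

lemma lyapunov_int:
  fixes M :: "'a measure" and S :: "('a \<Rightarrow> real) set"
  assumes fin: "finite_measure M" and na: "nonatomic M" and S: "finite S" "\<And>h. h \<in> S \<Longrightarrow> integrable M h"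
    and th: "0 \<le> \<theta>" "\<theta> \<le> 1"
  shows "\<exists>A\<in>sets M. \<forall>h\<in>S. (LINT x:A|M. h x) = \<theta> * (LINT x|M. h x)"
proof -
  interpret finite_measure M by (rule fin)
  define w where "w x = 1 + (\<Sum>h\<in>S. \<bar>h x\<bar>)" for x
  have wint: "integrable M w" unfolding w_def using S by (intro Bochner_Integration.integrable_add integrable_sum integrable_abs) auto
  have wm[measurable]: "w \<in> borel_measurable M" using wint by auto
  have w1: "1 \<le> w x" for x unfolding w_def by (simp add: sum_nonneg)
  have hw: "\<bar>h x\<bar> \<le> w x" if "h \<in> S" for h x
  proof -
    have "\<bar>h x\<bar> \<le> (\<Sum>h\<in>S. \<bar>h x\<bar>)" by (rule member_le_sum[where f="\<lambda>h. \<bar>h x\<bar>"]) (use S(1) that in auto)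
    then show ?thesis unfolding w_def by simp
  qed
  define N where "N = density M w"
  have sN[simp]: "sets N = sets M" and spN[simp]: "space N = space M" by (simp_all add: N_def)
  have nn: "AE x in M. 0 \<le> w x" using w1 by (auto intro: order.trans[OF zero_le_one])
  have intN: "integral\<^sup>L N f = integral\<^sup>L M (\<lambda>x. w x *\<^sub>R f x)" if "f \<in> borel_measurable M" for f :: "'a \<Rightarrow> real"
    unfolding N_def by (rule integral_density[OF that wm nn])
  have finN: "finite_measure N"
  proof (rule finite_measureI)
    have "emeasure N (space N) = (\<integral>\<^sup>+ x. ennreal (w x) * indicator (space M) x \<partial>M)"
      unfolding N_def by (simp add: emeasure_density)
    also have "\<dots> = (\<integral>\<^sup>+ x. ennreal (w x) \<partial>M)" by (intro nn_integral_cong) auto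
    also have "\<dots> = ennreal (integral\<^sup>L M w)" by (rule nn_integral_eq_integral[OF wint nn])
    finally show "emeasure N (space N) \<noteq> \<infinity>" by simp
  qed
  interpret N: finite_measure N by (rule finN)
  have mN: "measure N A = integral\<^sup>L M (\<lambda>x. w x * indicator A x)" if "A \<in> sets M" for A
  proof -
    have "measure N A = integral\<^sup>L N (indicator A)"
      using that sets.sets_into_space[OF that] by (simp add: Int_absorb2)
    also have "\<dots> = integral\<^sup>L M (\<lambda>x. w x * indicator A x)" using that by (subst intN) auto
    finally show ?thesis .
  qed
  have mge: "measure M A \<le> measure N A" if "A \<in> sets M" for A
  proof -
    have "measure M A = integral\<^sup>L M (indicator A)"
      using that sets.sets_into_space[OF that] by (simp add: Int_absorb2)
    also have "\<dots> \<le> integral\<^sup>L M (\<lambda>x. w x * indicator A x)"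
    proof (rule integral_mono)
      show "integrable M (indicator A :: 'a \<Rightarrow> real)" using that by (simp add: integrable_indicator_iff Int_absorb2 sets.sets_into_space less_top[symmetric])
      show "integrable M (\<lambda>x. w x * indicator A x)"
        using integrable_mult_indicator[OF that wint] by (simp add: mult.commute)
      show "indicator A x \<le> w x * indicator A x" for x using w1[of x] by (simp add: indicator_def)
    qed
    finally show ?thesis using mN[OF that] by simp
  qed
  have mzero: "measure N A = 0" if "A \<in> sets M" "measure M A = 0" for A
  proof -
    have "A \<in> null_sets M" using that by (simp add: emeasure_eq_measure null_sets_def)
    then have "AE x in M. w x * indicator A x = 0" by (auto dest: AE_not_in elim!: eventually_mono)
    then have "integral\<^sup>L M (\<lambda>x. w x * indicator A x) = integral\<^sup>L M (\<lambda>x. 0)"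
      by (intro integral_cong_AE) (use that in auto)
    then show ?thesis using mN[OF that(1)] by simp
  qed
  have naN: "nonatomic N"
    unfolding nonatomic_def
  proof (intro ballI impI)
    fix A assume A: "A \<in> sets N" "0 < measure N A"
    then have As: "A \<in> sets M" by simp
    have "measure M A \<noteq> 0" using mzero[OF As] A(2) by auto
    then have "measure M A > 0" using measure_nonneg[of M A] by linarith
    then obtain B where B: "B \<in> sets M" "B \<subseteq> A" "0 < measure M B" "measure M B < measure M A"
      using na As unfolding nonatomic_def by blast
    have "measure M (A - B) = measure M A - measure M B" using B As by (simp add: finite_measure_Diff)
    then have "0 < measure N (A - B)" using mge[of "A - B"] B As by auto
    moreover have "measure N (A - B) = measure N A - measure N B" using B As by (simp add: N.finite_measure_Diff)
    moreover have "0 < measure N B" using mge[OF B(1)] B by simp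
    ultimately show "\<exists>B\<in>sets N. B \<subseteq> A \<and> 0 < measure N B \<and> measure N B < measure N A"
      using B by (intro bexI[of _ B]) auto
  qed
  define G where "G h x = h x / w x" for h x
  have Gb: "N.bnd (G h)" if "h \<in> S" for h
  proof -
    have "h \<in> borel_measurable M" using S(2)[OF that] by auto
    then have "G h \<in> borel_measurable M" unfolding G_def by measurable
    then have "G h \<in> borel_measurable N" by (simp cong: measurable_cong_sets)
    moreover have "\<bar>G h x\<bar> \<le> 1" for x
    proof -
      have "\<bar>G h x\<bar> = \<bar>h x\<bar> / w x" using w1[of x] by (simp add: G_def abs_divide)
      also have "\<dots> \<le> 1" using hw[OF that, of x] w1[of x] by simp
      finally show ?thesis .
    qed
    ultimately show ?thesis unfolding N.bnd_def by simp
  qed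
  have conv: "(LINT x:A|N. G h x) = (LINT x:A|M. h x)" if "h \<in> S" "A \<in> sets M" for h A
  proof -
    have hm: "h \<in> borel_measurable M" using S(2)[OF that(1)] by auto
    have "(LINT x:A|N. G h x) = integral\<^sup>L N (\<lambda>x. indicator A x *\<^sub>R G h x)"
      by (simp add: set_lebesgue_integral_def)
    also have "\<dots> = integral\<^sup>L M (\<lambda>x. w x *\<^sub>R (indicator A x *\<^sub>R G h x))"
      by (rule intN) (use hm that(2) in \<open>simp add: G_def\<close>)
    also have "\<dots> = integral\<^sup>L M (\<lambda>x. indicator A x *\<^sub>R h x)"
    proof (rule Bochner_Integration.integral_cong[OF refl])
      fix x show "w x *\<^sub>R (indicator A x *\<^sub>R G h x) = indicator A x *\<^sub>R h x"
        using w1[of x] by (simp add: G_def)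
    qed
    finally show ?thesis by (simp add: set_lebesgue_integral_def)
  qed
  have full: "(LINT x:space M|M. h x) = (LINT x|M. h x)" for h :: "'a \<Rightarrow> real"
    unfolding set_lebesgue_integral_def by (rule Bochner_Integration.integral_cong) auto
  have fG: "finite (G ` S)" using S(1) by simp
  have bG: "\<And>g. g \<in> G ` S \<Longrightarrow> N.bnd g" using Gb by auto
  obtain A where A: "A \<in> sets N" "\<forall>g\<in>G ` S. (LINT x:A|N. g x) = \<theta> * (LINT x:space N|N. g x)"
    using N.lyapunov_bnd[OF naN fG bG th] by blast
  show ?thesis
  proof (intro bexI[of _ A] ballI)
    show "A \<in> sets M" using A by simp
    fix h assume h: "h \<in> S"
    have "(LINT x:A|N. G h x) = \<theta> * (LINT x:space N|N. G h x)" using A h by auto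
    then show "(LINT x:A|M. h x) = \<theta> * (LINT x|M. h x)"
      using conv[OF h] A(1) full[of h] by simp
  qed
qed

lemma mix_integral:
  fixes k1 k2 :: "'a \<Rightarrow> real"
  assumes k: "integrable M k1" "integrable M k2" and A: "A \<in> sets M"
    and eq: "(LINT x:A|M. k1 x - k2 x) = u * (LINT x|M. k1 x - k2 x)"
  shows "(LINT x|M. (if x \<in> A then k1 x else k2 x)) = u * integral\<^sup>L M k1 + (1 - u) * integral\<^sup>L M k2"
proof -
  have "(LINT x|M. (if x \<in> A then k1 x else k2 x)) = (LINT x|M. k2 x + indicator A x *\<^sub>R (k1 x - k2 x))"
    by (rule Bochner_Integration.integral_cong) (auto simp: indicator_def)
  also have "\<dots> = integral\<^sup>L M k2 + (LINT x:A|M. k1 x - k2 x)"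
    unfolding set_lebesgue_integral_def
    by (rule Bochner_Integration.integral_add)
       (use k A integrable_mult_indicator[OF A Bochner_Integration.integrable_diff[OF k]] in auto)
  also have "\<dots> = u * integral\<^sup>L M k1 + (1 - u) * integral\<^sup>L M k2"
    using eq k by (simp add: algebra_simps)
  finally show ?thesis .
qed

theorem lemma1:
  fixes M :: "(real^'n^'n) measure"
    and \<H> :: "(real^'n^'n) set"
    and Pmax :: real
    and \<sigma> :: "real^'n^'n \<Rightarrow> 'n::finite \<Rightarrow> bool"
    and f0 :: "real^'n \<Rightarrow> real^'n^'n \<Rightarrow> real^'n"
    and fc :: "'n \<Rightarrow> real^'n \<Rightarrow> real^'n^'n \<Rightarrow> real"
    and g :: "real^'n \<Rightarrow> real"
    and c :: "real^'n"
  assumes prob: "prob_space M"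
    and sets_M: "sets M = sets (restrict_space borel \<H>)"
    and space_M: "space M = \<H>"
    and Pmax_pos: "Pmax > 0"
    and sigma_meas: "\<And>i. {H\<in>space M. \<sigma> H i} \<in> sets M"
    and rho_pos: "\<And>i. measure M {H\<in>space M. \<sigma> H i} > 0"
    and f0_meas: "(\<lambda>(x, H). f0 x H) \<in> borel_measurable borel"
    and fc_meas: "\<And>i. (\<lambda>(x, H). fc i x H) \<in> borel_measurable borel"
    and f0_int: "\<And>p. p \<in> feasible_policies M Pmax \<sigma> \<Longrightarrow> integrable M (\<lambda>H. f0 (p H) H)"
    and fc_int: "\<And>p i. p \<in> feasible_policies M Pmax \<sigma> \<Longrightarrow> integrable M (\<lambda>H. fc i (p H) H)"
    and c_nonneg: "\<And>i. c $ i \<ge> 0"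
    and AS1: "nonatomic M"
    and AS2_concave: "concave_on UNIV g"
    and AS2_mono: "\<And>x y. (\<And>j. x $ j \<le> y $ j) \<Longrightarrow> g x \<le> g y"
  shows "convex (achievable_set M Pmax \<sigma> g f0 fc c)"
proof -
  interpret prob_space M by (rule prob)
  have fin: "finite_measure M" by unfold_locales
  let ?Sg = "\<lambda>i. {H\<in>space M. \<sigma> H i}"
  show ?thesis
  proof (rule convexI)
    fix x y :: "real \<times> (real^'n)" and u v :: real
    assume x: "x \<in> achievable_set M Pmax \<sigma> g f0 fc c" and y: "y \<in> achievable_set M Pmax \<sigma> g f0 fc c"
      and u0: "0 \<le> u" and v0: "0 \<le> v" and uv1: "u + v = 1"
    have uv: "0 \<le> u \<and> 0 \<le> v \<and> u + v = 1" using u0 v0 uv1 by simp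
    obtain a \<xi> where xe: "x = (a, \<xi>)" by (cases x)
    obtain b \<eta> where ye: "y = (b, \<eta>)" by (cases y)
    obtain p1 where p1: "p1 \<in> feasible_policies M Pmax \<sigma>" "objective M g f0 p1 \<ge> a"
      "\<And>i. cond_constraint M \<sigma> fc p1 i \<ge> \<xi> $ i + c $ i"
      using x unfolding xe achievable_set_def by auto
    obtain p2 where p2: "p2 \<in> feasible_policies M Pmax \<sigma>" "objective M g f0 p2 \<ge> b"
      "\<And>i. cond_constraint M \<sigma> fc p2 i \<ge> \<eta> $ i + c $ i"
      using y unfolding ye achievable_set_def by auto
    define k0 where "k0 p j H = f0 (p H) H $ j" for p :: "real^'n^'n \<Rightarrow> real^'n" and j H
    define kc where "kc p i H = indicator (?Sg i) H * fc i (p H) H" for p :: "real^'n^'n \<Rightarrow> real^'n" and i H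
    have ik0: "integrable M (k0 p j)" if "p \<in> feasible_policies M Pmax \<sigma>" for p j
      unfolding k0_def by (rule integrable_bounded_linear[OF bounded_linear_vec_nth f0_int[OF that]])
    have ikc: "integrable M (kc p i)" if "p \<in> feasible_policies M Pmax \<sigma>" for p i
      unfolding kc_def using integrable_mult_indicator[OF sigma_meas fc_int[OF that]] by simp
    define S where "S = range (\<lambda>j H. k0 p1 j H - k0 p2 j H) \<union> range (\<lambda>i H. kc p1 i H - kc p2 i H)"
    have Sfin: "finite S" unfolding S_def by simp
    have Sint: "\<And>h. h \<in> S \<Longrightarrow> integrable M h"
      unfolding S_def using ik0[OF p1(1)] ik0[OF p2(1)] ikc[OF p1(1)] ikc[OF p2(1)] by auto
    obtain A where A: "A \<in> sets M" "\<forall>h\<in>S. (LINT x:A|M. h x) = u * (LINT x|M. h x)"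
      using lyapunov_int[OF fin AS1 Sfin Sint, of u] uv by auto
    have v: "v = 1 - u" using uv by simp
    define p where "p H = (if H \<in> A then p1 H else p2 H)" for H
    have pf: "p \<in> feasible_policies M Pmax \<sigma>"
    proof -
      have "p \<in> borel_measurable M" unfolding p_def
        by (rule measurable_If_set) (use p1(1) p2(1) A in \<open>auto simp: feasible_policies_def\<close>)
      then show ?thesis using p1(1) p2(1) unfolding feasible_policies_def p_def by auto
    qed
    have m0: "(LINT H|M. f0 (p H) H $ j) = u * integral\<^sup>L M (k0 p1 j) + v * integral\<^sup>L M (k0 p2 j)" for j
    proof -
      have "(LINT H|M. f0 (p H) H $ j) = (LINT H|M. (if H \<in> A then k0 p1 j H else k0 p2 j H))"
        by (rule Bochner_Integration.integral_cong) (auto simp: p_def k0_def)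
      also have "\<dots> = u * integral\<^sup>L M (k0 p1 j) + v * integral\<^sup>L M (k0 p2 j)"
        unfolding v
        by (rule mix_integral[OF ik0[OF p1(1)] ik0[OF p2(1)] A(1)])
           (use A(2) in \<open>auto simp: S_def\<close>)
      finally show ?thesis .
    qed
    define E1 where "E1 = (\<chi> j. LINT H|M. f0 (p1 H) H $ j)"
    define E2 where "E2 = (\<chi> j. LINT H|M. f0 (p2 H) H $ j)"
    have obj: "objective M g f0 p = g ((1 - v) *\<^sub>R E1 + v *\<^sub>R E2)"
      unfolding objective_def E1_def E2_def m0 k0_def using v
      by (intro arg_cong[where f=g]) (simp add: vec_eq_iff)
    have "objective M g f0 p \<ge> (1 - v) * g E1 + v * g E2"
      unfolding obj by (rule concave_onD[OF AS2_concave]) (use uv in auto)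
    moreover have "g E1 = objective M g f0 p1" "g E2 = objective M g f0 p2"
      by (simp_all add: objective_def E1_def E2_def)
    ultimately have objge: "objective M g f0 p \<ge> u * a + v * b"
      using p1(2) p2(2) uv v by (smt (verit) mult_left_mono)
    have mc: "cond_constraint M \<sigma> fc p i = u * cond_constraint M \<sigma> fc p1 i + v * cond_constraint M \<sigma> fc p2 i" for i
    proof -
      have si: "(LINT H:?Sg i|M. fc i (q H) H) = integral\<^sup>L M (kc q i)" for q
        unfolding set_lebesgue_integral_def kc_def by simp
      have "integral\<^sup>L M (kc p i) = (LINT H|M. (if H \<in> A then kc p1 i H else kc p2 i H))"
        by (rule Bochner_Integration.integral_cong) (auto simp: p_def kc_def)
      also have "\<dots> = u * integral\<^sup>L M (kc p1 i) + v * integral\<^sup>L M (kc p2 i)"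
        unfolding v
        by (rule mix_integral[OF ikc[OF p1(1)] ikc[OF p2(1)] A(1)])
           (use A(2) in \<open>auto simp: S_def\<close>)
      finally show ?thesis unfolding cond_constraint_def si by (simp add: add_divide_distrib)
    qed
    have cge: "cond_constraint M \<sigma> fc p i \<ge> (u *\<^sub>R \<xi> + v *\<^sub>R \<eta>) $ i + c $ i" for i
    proof -
      have "u * (\<xi> $ i + c $ i) \<le> u * cond_constraint M \<sigma> fc p1 i" using p1(3)[of i] uv by (intro mult_left_mono) auto
      moreover have "v * (\<eta> $ i + c $ i) \<le> v * cond_constraint M \<sigma> fc p2 i" using p2(3)[of i] uv by (intro mult_left_mono) auto
      moreover have "(u + v) * c $ i = c $ i" using uv by simp
      then have "u * c $ i + v * c $ i = c $ i" by (simp add: distrib_right)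
      ultimately show ?thesis unfolding mc by (simp add: algebra_simps)
    qed
    show "u *\<^sub>R x + v *\<^sub>R y \<in> achievable_set M Pmax \<sigma> g f0 fc c"
      unfolding xe ye achievable_set_def using pf objge cge by auto
  qed
qed

end
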